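(* Let $\eta\in\mathcal O_N$ and let $p^B_i(\eta)$, $p^D_i(\eta)$ denote the probabilities that an explorer attaches to column $i$ in configuration $\eta$ under ballistic, respectively diffusive, deposition. Then for every $k=1,\dots,N$, $$\sum_{i=1}^k p^B_i(\eta)\ge\sum_{i=1}^k\frac{\eta_i+1}{|\eta|+N}\quad\text{and}\quad\sum_{i=1}^k p^D_i(\eta)\ge\sum_{i=1}^k\frac{\eta_i+1}{|\eta|+N}.$$
   Context: Deposition models: for $N\ge2$, $G_N=\{1,\dots,N\}$, a configuration $\eta\in\mathbb N^N$ gives column heights, $|\eta|=\sum_i\eta_i$. Given $\eta$, an explorer is a walk $(X_n,Z_n)_{n\ge0}$ with $(X_n)$ i.i.d. uniform on $G_N$, $Z_0=\max_i\eta_i+1$, and increments $Z_{n+1}-Z_n$ i.i.d. uniform on $\{-1,1\}$ independent of $(X_n)$ (diffusive deposition) or identically $-1$ (ballistic deposition); with $n^*=\inf\{n:Z_n\le\eta_{X_n}\}$, the explorer attaches to column $X_{n^*}$. $\mathcal O_N$ is the set of $\eta\in\mathbb N^N$ with $\eta_1\ge\dots\ge\eta_N$. *)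

theory Defs
  imports "HOL-Probability.Probability"
begin

text \<open>A configuration is eta :: nat => nat, relevant on the columns {1..N}.
  A sample point omega :: nat => nat \<times> int gives at time n the pair
  (X_n, Z_(n+1) - Z_n); all coordinates are i.i.d. with law
  (uniform on {1..N}) \<times> S, where S is the increment law.\<close>

definition explorer_space :: "nat \<Rightarrow> int pmf \<Rightarrow> (nat \<Rightarrow> nat \<times> int) measure" where
  "explorer_space N S = PiM UNIV (\<lambda>_. measure_pmf (pair_pmf (pmf_of_set {1..N}) S))"

definition max_height :: "nat \<Rightarrow> (nat \<Rightarrow> nat) \<Rightarrow> nat" where
  "max_height N eta = Max (eta ` {1..N})"

definition config_size :: "nat \<Rightarrow> (nat \<Rightarrow> nat) \<Rightarrow> nat" where
  "config_size N eta = (\<Sum>i=1..N. eta i)"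

definition expl_height :: "nat \<Rightarrow> (nat \<Rightarrow> nat) \<Rightarrow> (nat \<Rightarrow> nat \<times> int) \<Rightarrow> nat \<Rightarrow> int" where
  "expl_height N eta \<omega> n = int (max_height N eta) + 1 + (\<Sum>m<n. snd (\<omega> m))"

definition expl_stops :: "nat \<Rightarrow> (nat \<Rightarrow> nat) \<Rightarrow> (nat \<Rightarrow> nat \<times> int) \<Rightarrow> nat \<Rightarrow> bool" where
  "expl_stops N eta \<omega> n \<longleftrightarrow> expl_height N eta \<omega> n \<le> int (eta (fst (\<omega> n)))"

definition attach_prob :: "int pmf \<Rightarrow> nat \<Rightarrow> (nat \<Rightarrow> nat) \<Rightarrow> nat \<Rightarrow> real" where
  "attach_prob S N eta i = measure (explorer_space N S)
     {\<omega> \<in> space (explorer_space N S). \<exists>n. expl_stops N eta \<omega> n \<and>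
        (\<forall>m<n. \<not> expl_stops N eta \<omega> m) \<and> fst (\<omega> n) = i}"

definition ballistic_step :: "int pmf" where
  "ballistic_step = return_pmf (-1)"

definition diffusive_step :: "int pmf" where
  "diffusive_step = pmf_of_set {-1, 1}"

definition pB :: "nat \<Rightarrow> (nat \<Rightarrow> nat) \<Rightarrow> nat \<Rightarrow> real" where
  "pB = attach_prob ballistic_step"

definition pD :: "nat \<Rightarrow> (nat \<Rightarrow> nat) \<Rightarrow> nat \<Rightarrow> real" where
  "pD = attach_prob diffusive_step"

definition ordered_config :: "nat \<Rightarrow> (nat \<Rightarrow> nat) \<Rightarrow> bool" where
  "ordered_config N eta \<longleftrightarrow> (\<forall>i j. 1 \<le> i \<longrightarrow> i \<le> j \<longrightarrow> j \<le> N \<longrightarrow> eta j \<le> eta i)"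

end

theory Submission
  imports Defs
begin


fun hitL :: "(nat \<Rightarrow> nat) \<Rightarrow> nat set \<Rightarrow> int \<Rightarrow> (nat \<times> int) list \<Rightarrow> bool" where
  "hitL eta K z [] = False"
| "hitL eta K z (x # xs) = (if z \<le> int (eta (fst x)) then fst x \<in> K else hitL eta K (z + snd x) xs)"

definition stopsS :: "(nat \<Rightarrow> nat) \<Rightarrow> int \<Rightarrow> (nat \<times> int) stream \<Rightarrow> nat \<Rightarrow> bool" where
  "stopsS eta z s n \<longleftrightarrow> z + (\<Sum>m<n. snd (s !! m)) \<le> int (eta (fst (s !! n)))"

lemma stopsS_0: "stopsS eta z s 0 \<longleftrightarrow> z \<le> int (eta (fst (shd s)))"
  by (simp add: stopsS_def)

lemma stopsS_Suc: "stopsS eta z s (Suc n) \<longleftrightarrow> stopsS eta (z + snd (shd s)) (stl s) n"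
  unfolding stopsS_def sum.lessThan_Suc_shift by (simp add: add.assoc)

lemma hitL_stake:
  "hitL eta K z (stake T s) \<longleftrightarrow>
   (\<exists>n<T. stopsS eta z s n \<and> (\<forall>m<n. \<not> stopsS eta z s m) \<and> fst (s !! n) \<in> K)"
proof (induction T arbitrary: z s)
  case 0 then show ?case by simp
next
  case (Suc T)
  show ?case
  proof (cases "stopsS eta z s 0")
    case True
    have "\<And>n. stopsS eta z s n \<and> (\<forall>m<n. \<not> stopsS eta z s m) \<Longrightarrow> n = 0"
      using True by (metis gr0I)
    then show ?thesis using True by (auto simp: stopsS_0) (metis snth.simps(1))
  next
    case False
    have "hitL eta K z (stake (Suc T) s) = hitL eta K (z + snd (shd s)) (stake T (stl s))"
      using False by (simp add: stopsS_0)
    also have "\<dots> = (\<exists>n<T. stopsS eta (z + snd (shd s)) (stl s) n \<and> (\<forall>m<n. \<not> stopsS eta (z + snd (shd s)) (stl s) m) \<and> fst (stl s !! n) \<in> K)"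
      by (rule Suc.IH)
    also have "\<dots> = (\<exists>n<Suc T. stopsS eta z s n \<and> (\<forall>m<n. \<not> stopsS eta z s m) \<and> fst (s !! n) \<in> K)"
    proof
      assume "\<exists>n<T. stopsS eta (z + snd (shd s)) (stl s) n \<and> (\<forall>m<n. \<not> stopsS eta (z + snd (shd s)) (stl s) m) \<and> fst (stl s !! n) \<in> K"
      then obtain n where n: "n<T" "stopsS eta (z + snd (shd s)) (stl s) n" "\<forall>m<n. \<not> stopsS eta (z + snd (shd s)) (stl s) m" "fst (stl s !! n) \<in> K" by blast
      have "\<forall>m<Suc n. \<not> stopsS eta z s m"
      proof (intro allI impI)
        fix m assume "m < Suc n"
        then show "\<not> stopsS eta z s m" using n False by (cases m) (auto simp: stopsS_Suc)
      qed
      then show "\<exists>n<Suc T. stopsS eta z s n \<and> (\<forall>m<n. \<not> stopsS eta z s m) \<and> fst (s !! n) \<in> K"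
        using n by (intro exI[of _ "Suc n"]) (auto simp: stopsS_Suc)
    next
      assume "\<exists>n<Suc T. stopsS eta z s n \<and> (\<forall>m<n. \<not> stopsS eta z s m) \<and> fst (s !! n) \<in> K"
      then obtain n where n: "n<Suc T" "stopsS eta z s n" "\<forall>m<n. \<not> stopsS eta z s m" "fst (s !! n) \<in> K" by blast
      then obtain n' where n': "n = Suc n'" using False by (cases n) auto
      have "\<forall>m<n'. \<not> stopsS eta (z + snd (shd s)) (stl s) m"
        using n(3) n' by (auto simp: stopsS_Suc[symmetric])
      then show "\<exists>n<T. stopsS eta (z + snd (shd s)) (stl s) n \<and> (\<forall>m<n. \<not> stopsS eta (z + snd (shd s)) (stl s) m) \<and> fst (stl s !! n) \<in> K"
        using n n' by (intro exI[of _ n']) (auto simp: stopsS_Suc)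
    qed
    finally show ?thesis .
  qed
qed

definition Mp :: "nat \<Rightarrow> int pmf \<Rightarrow> (nat \<times> int) measure" where
  "Mp N S = measure_pmf (pair_pmf (pmf_of_set {1..N}) S)"

lemma hit_set_meas: "{x \<in> space (stream_space (Mp N S)). hitL eta K z (stake T x)} \<in> sets (stream_space (Mp N S))"
proof -
  have e: "sets (stream_space (Mp N S)) = sets (stream_space (count_space UNIV))"
    by (rule sets_stream_space_cong) (simp add: Mp_def)
  have [measurable]: "stake T \<in> measurable (stream_space (Mp N S)) (count_space UNIV)"
    using measurable_cong_sets[OF e refl] measurable_stake by blast
  then show ?thesis by measurable
qed

lemma sum_if_split:
  fixes x :: "nat \<Rightarrow> real"
  assumes "finite A"
  shows "(\<Sum>i\<in>A. if P i then x i else y) = (\<Sum>i\<in>{i\<in>A. P i}. x i) + real (card {i\<in>A. \<not> P i}) * y"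
proof -
  have "(\<Sum>i\<in>A. if P i then x i else y) = (\<Sum>i\<in>A \<inter> {i. P i}. x i) + (\<Sum>i\<in>A \<inter> - {i. P i}. y)"
    using assms by (rule sum.If_cases)
  moreover have "A \<inter> {i. P i} = {i\<in>A. P i}" "A \<inter> - {i. P i} = {i\<in>A. \<not> P i}" by auto
  ultimately show ?thesis by simp
qed

lemma card_split: "finite A \<Longrightarrow> card {i\<in>A. P i} + card {i\<in>A. \<not> P i} = card A"
proof -
  assume "finite A"
  have "{i\<in>A. P i} \<union> {i\<in>A. \<not> P i} = A" "{i\<in>A. P i} \<inter> {i\<in>A. \<not> P i} = {}" by auto
  then show ?thesis using \<open>finite A\<close> card_Un_disjoint[of "{i\<in>A. P i}" "{i\<in>A. \<not> P i}"] by simp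
qed

lemma ringW:
  fixes s a p q e1 e2 e3 e4 A B C D :: real
  assumes "s*e1 = p*e3" "s*e2 = q*e4"
  shows "s*(a*(e1 + a*p*A + (1-a)*q*B) + (1-a)*(e2 + a*p*C + (1-a)*q*D)) = a*p*(e3 + s*(a*A + (1-a)*C)) + (1-a)*q*(e4 + s*(a*B+(1-a)*D))"
proof -
  have "s*(a*(e1 + a*p*A + (1-a)*q*B) + (1-a)*(e2 + a*p*C + (1-a)*q*D)) = a*(s*e1) + (1-a)*(s*e2) + s*(a*(a*p*A + (1-a)*q*B) + (1-a)*(a*p*C + (1-a)*q*D))"
    by (simp add: algebra_simps)
  also have "\<dots> = a*(p*e3) + (1-a)*(q*e4) + s*(a*(a*p*A + (1-a)*q*B) + (1-a)*(a*p*C + (1-a)*q*D))" using assms by simp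
  also have "\<dots> = a*p*(e3 + s*(a*A + (1-a)*C)) + (1-a)*q*(e4 + s*(a*B+(1-a)*D))" by (simp add: algebra_simps)
  finally show ?thesis .
qed

locale expl =
  fixes N :: nat and eta :: "nat \<Rightarrow> nat" and S :: "int pmf" and \<alpha> :: real
  assumes N2: "2 \<le> N"
  and alpha: "\<alpha> = 0 \<or> \<alpha> = 1/2"
  and Sint: "\<And>F. 0 \<le> F 1 \<Longrightarrow> 0 \<le> F (-1) \<Longrightarrow> (\<integral>\<^sup>+\<xi>. ennreal (F \<xi>) \<partial>S) = ennreal (\<alpha> * F 1 + (1-\<alpha>) * F (-1))"
begin

definition "fK K T z = measure (stream_space (Mp N S)) {x\<in>space (stream_space (Mp N S)). hitL eta K z (stake T x)}"
definition "cnt K z = card {i\<in>K. z \<le> int (eta i)}"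
definition "sf z = 1 - real (cnt {1..N} z) / real N"

lemma alpha_ge: "0 \<le> \<alpha>" and alpha_le: "\<alpha> \<le> 1/2" and alpha_le1: "\<alpha> \<le> 1" using alpha by auto

lemma N_pos: "0 < N" using N2 by simp

lemma prob_str: "prob_space (stream_space (Mp N S))"
  unfolding Mp_def by (rule prob_space.prob_space_stream_space[OF prob_space_measure_pmf])

lemma fK_0: "fK K 0 z = 0"
  by (simp add: fK_def)

lemma fK_nonneg: "0 \<le> fK K T z" by (simp add: fK_def)

lemma fK_le1: "fK K T z \<le> 1"
  unfolding fK_def using prob_space.prob_le_1[OF prob_str] by blast

lemma fK_step:
  "fK K (Suc T) z = (\<Sum>i\<in>{1..N}. (if z \<le> int (eta i) then (if i \<in> K then 1 else 0)
       else \<alpha> * fK K T (z+1) + (1-\<alpha>) * fK K T (z-1))) / real N"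
proof -
  let ?SS = "stream_space (Mp N S)"
  define G where "G t = (if z \<le> int (eta (fst t)) then (if fst t \<in> K then 1 else 0 :: real) else fK K T (z + snd t))" for t
  have G0: "0 \<le> G t" for t by (simp add: G_def fK_nonneg)
  have inner: "\<P>(x in ?SS. hitL eta K z (stake (Suc T) (t ## x))) = G t" for t
  proof -
    have "\<P>(x in ?SS. hitL eta K z (stake (Suc T) (t ## x))) = \<P>(x in ?SS. (if z \<le> int (eta (fst t)) then fst t \<in> K else hitL eta K (z + snd t) (stake T x)))"
      by simp
    also have "\<dots> = G t"
      using prob_space.prob_space[OF prob_str] by (auto simp: G_def fK_def)
    finally show ?thesis .
  qed
  have "ennreal (fK K (Suc T) z) = (\<integral>\<^sup>+t. ennreal (G t) \<partial>Mp N S)"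
    unfolding fK_def Mp_def
    apply (subst prob_space.prob_stream_space[OF prob_space_measure_pmf])
    using hit_set_meas[of N S eta K z "Suc T"] inner by (simp_all add: Mp_def)
  also have "\<dots> = (\<integral>\<^sup>+i. \<integral>\<^sup>+\<xi>. ennreal (G (i, \<xi>)) \<partial>S \<partial>pmf_of_set {1..N})"
    unfolding Mp_def by (rule nn_integral_pair_pmf')
  also have "\<dots> = (\<integral>\<^sup>+i. ennreal (\<alpha> * G (i,1) + (1-\<alpha>) * G (i,-1)) \<partial>pmf_of_set {1..N})"
    by (intro nn_integral_cong Sint) (simp_all add: G0)
  also have "\<dots> = (\<Sum>i\<in>{1..N}. ennreal (\<alpha> * G (i,1) + (1-\<alpha>) * G (i,-1))) / real N"
    using N2 by (subst nn_integral_pmf_of_set) (auto simp: ennreal_of_nat_eq_real_of_nat)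
  also have "\<dots> = ennreal ((\<Sum>i\<in>{1..N}. \<alpha> * G (i,1) + (1-\<alpha>) * G (i,-1)) / real N)"
  proof -
    have nn: "0 \<le> \<alpha> * G (i,1) + (1-\<alpha>) * G (i,-1)" for i
      using alpha_ge alpha_le1 G0 by (intro add_nonneg_nonneg mult_nonneg_nonneg) auto
    have "(\<Sum>i\<in>{1..N}. ennreal (\<alpha> * G (i,1) + (1-\<alpha>) * G (i,-1))) = ennreal (\<Sum>i\<in>{1..N}. \<alpha> * G (i,1) + (1-\<alpha>) * G (i,-1))"
      using nn by (rule sum_ennreal)
    moreover have "ennreal (\<Sum>i\<in>{1..N}. \<alpha> * G (i,1) + (1-\<alpha>) * G (i,-1)) / ennreal (real N) = ennreal ((\<Sum>i\<in>{1..N}. \<alpha> * G (i,1) + (1-\<alpha>) * G (i,-1)) / real N)"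
      using N_pos nn by (intro divide_ennreal sum_nonneg) auto
    ultimately show ?thesis by simp
  qed
  finally have **: "ennreal (fK K (Suc T) z) = ennreal ((\<Sum>i\<in>{1..N}. \<alpha> * G (i,1) + (1-\<alpha>) * G (i,-1)) / real N)" .
  have X0: "0 \<le> (\<Sum>i\<in>{1..N}. \<alpha> * G (i,1) + (1-\<alpha>) * G (i,-1)) / real N"
    using alpha_ge alpha_le1 G0 by (intro divide_nonneg_nonneg sum_nonneg add_nonneg_nonneg mult_nonneg_nonneg) auto
  have *: "fK K (Suc T) z = (\<Sum>i\<in>{1..N}. \<alpha> * G (i,1) + (1-\<alpha>) * G (i,-1)) / real N"
    using ennreal_inj[OF fK_nonneg X0] ** by blast
  have m1: "z + - 1 = z - 1" by simp
  have pt: "\<alpha> * G (i,1) + (1-\<alpha>) * G (i,-1) = (if z \<le> int (eta i) then (if i \<in> K then 1 else 0)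
       else \<alpha> * fK K T (z+1) + (1-\<alpha>) * fK K T (z + -1))" for i
  proof (cases "z \<le> int (eta i)")
    case True
    then show ?thesis by (simp add: G_def left_diff_distrib)
  next
    case False
    then show ?thesis unfolding G_def fst_conv snd_conv by simp
  qed
  show ?thesis unfolding * pt m1 ..
qed

definition "Mh = max_height N eta"
definition "z0 = int Mh + 1"


lemma eta_le: "i \<in> {1..N} \<Longrightarrow> eta i \<le> Mh"
  unfolding Mh_def max_height_def by (rule Max_ge) auto

lemma Mh_attained: "\<exists>i\<in>{1..N}. eta i = Mh"
proof -
  have "Mh \<in> eta ` {1..N}" unfolding Mh_def max_height_def using N2 by (intro Max_in) auto
  then show ?thesis by auto
qed

lemma cnt_le: "K \<subseteq> {1..N} \<Longrightarrow> cnt K z \<le> N"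
proof -
  assume "K \<subseteq> {1..N}"
  then have "cnt K z \<le> card {1..N}" unfolding cnt_def by (intro card_mono) auto
  then show ?thesis by simp
qed

lemma cnt_low: "z \<le> 0 \<Longrightarrow> cnt {1..N} z = N"
  unfolding cnt_def by (subgoal_tac "{i \<in> {1..N}. z \<le> int (eta i)} = {1..N}") auto

lemma cnt_high: "K \<subseteq> {1..N} \<Longrightarrow> int Mh < z \<Longrightarrow> cnt K z = 0"
proof -
  assume K: "K \<subseteq> {1..N}" and z: "int Mh < z"
  have "{i \<in> K. z \<le> int (eta i)} = {}"
  proof (rule ccontr)
    assume "{i \<in> K. z \<le> int (eta i)} \<noteq> {}"
    then obtain i where "i \<in> K" "z \<le> int (eta i)" by blast
    moreover have "eta i \<le> Mh" using K \<open>i \<in> K\<close> eta_le by blast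
    ultimately show False using z by linarith
  qed
  then show ?thesis unfolding cnt_def by (simp only: card.empty)
qed

lemma cnt_pos: "z \<le> int Mh \<Longrightarrow> 1 \<le> cnt {1..N} z"
proof -
  assume "z \<le> int Mh"
  obtain i where "i \<in> {1..N}" "eta i = Mh" using Mh_attained by blast
  then have "i \<in> {i \<in> {1..N}. z \<le> int (eta i)}" using \<open>z \<le> int Mh\<close> by simp
  then have "{i \<in> {1..N}. z \<le> int (eta i)} \<noteq> {}" by blast
  then have "0 < card {i \<in> {1..N}. z \<le> int (eta i)}" by (simp add: card_gt_0_iff)
  then show ?thesis unfolding cnt_def by simp
qed

lemma sf_nonneg: "0 \<le> sf z"
  using cnt_le[of "{1..N}" z] N_pos by (simp add: sf_def field_simps)

lemma sf_le1: "sf z \<le> 1"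
  by (simp add: sf_def)

lemma sf_low: "z \<le> 0 \<Longrightarrow> sf z = 0"
  using N_pos cnt_low[of z] by (simp add: sf_def)

lemma sf_high: "int Mh < z \<Longrightarrow> sf z = 1"
  by (simp add: sf_def cnt_high)

lemma sf_mid: "z \<le> int Mh \<Longrightarrow> sf z \<le> 1 - 1 / real N"
  using cnt_pos[of z] N_pos by (simp add: sf_def divide_right_mono)

lemma fK_Suc:
  assumes "K \<subseteq> {1..N}"
  shows "fK K (Suc T) z = real (cnt K z) / real N + sf z * (\<alpha> * fK K T (z+1) + (1-\<alpha>) * fK K T (z-1))"
proof -
  let ?Y = "\<alpha> * fK K T (z+1) + (1-\<alpha>) * fK K T (z-1)"
  have "(\<Sum>i\<in>{1..N}. (if z \<le> int (eta i) then (if i \<in> K then 1 else 0) else ?Y))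
      = (\<Sum>i\<in>{i\<in>{1..N}. z \<le> int (eta i)}. (if i \<in> K then 1 else 0)) + real (card {i\<in>{1..N}. \<not> z \<le> int (eta i)}) * ?Y"
    by (rule sum_if_split) simp
  also have "(\<Sum>i\<in>{i\<in>{1..N}. z \<le> int (eta i)}. (if i \<in> K then 1 else 0 :: real)) = real (cnt K z)"
  proof -
    have "(\<Sum>i\<in>{i\<in>{1..N}. z \<le> int (eta i)}. (if i \<in> K then 1 else 0 :: real))
        = (\<Sum>i\<in>{i\<in>{i\<in>{1..N}. z \<le> int (eta i)}. i \<in> K}. 1) + real (card {i\<in>{i\<in>{1..N}. z \<le> int (eta i)}. \<not> i \<in> K}) * 0"
      by (rule sum_if_split) simp
    also have "{i\<in>{i\<in>{1..N}. z \<le> int (eta i)}. i \<in> K} = {i\<in>K. z \<le> int (eta i)}" using assms by auto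
    finally show ?thesis by (simp add: cnt_def)
  qed
  also have "real (card {i\<in>{1..N}. \<not> z \<le> int (eta i)}) = real N - real (cnt {1..N} z)"
    using card_split[of "{1..N}" "\<lambda>i. z \<le> int (eta i)"] by (simp add: cnt_def)
  finally have e: "(\<Sum>i\<in>{1..N}. (if z \<le> int (eta i) then (if i \<in> K then 1 else 0) else ?Y)) = real (cnt K z) + (real N - real (cnt {1..N} z)) * ?Y" .
  show ?thesis unfolding fK_step e using N_pos by (simp add: sf_def field_simps)
qed

primrec W :: "nat \<Rightarrow> int \<Rightarrow> int \<Rightarrow> real" where
  "W 0 h z = 0"
| "W (Suc T) h z = (if z = h then 1 else 0) + sf z * (\<alpha> * W T h (z+1) + (1-\<alpha>) * W T h (z-1))"

lemma W_nonneg: "0 \<le> W T h z"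
  by (induction T arbitrary: z) (auto intro!: add_nonneg_nonneg mult_nonneg_nonneg sf_nonneg alpha_ge simp: alpha_le1)

lemma W_mono: "W T h z \<le> W (Suc T) h z"
proof (induction T arbitrary: z)
  case 0 then show ?case by (simp add: W_nonneg)
next
  case (Suc T)
  have "\<alpha> * W T h (z+1) + (1-\<alpha>) * W T h (z-1) \<le> \<alpha> * W (Suc T) h (z+1) + (1-\<alpha>) * W (Suc T) h (z-1)"
    by (intro add_mono mult_left_mono Suc.IH) (use alpha_ge alpha_le1 in auto)
  from mult_left_mono[OF this sf_nonneg[of z]] show ?case
    unfolding W.simps(2)[of "Suc T" h z] W.simps(2)[of T h z] by linarith
qed

lemma W_fwd: "W (Suc T) h z = (if z = h then 1 else 0) + \<alpha> * sf (h-1) * W T (h-1) z + (1-\<alpha>) * sf (h+1) * W T (h+1) z"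
proof (induction T arbitrary: z h)
  case 0 then show ?case by simp
next
  case (Suc T)
  have "W (Suc (Suc T)) h z = (if z = h then 1 else 0) + sf z * (\<alpha> * W (Suc T) h (z+1) + (1-\<alpha>) * W (Suc T) h (z-1))"
    by simp
  also have "\<dots> = (if z = h then 1 else 0) + sf z * (\<alpha> * ((if z+1 = h then 1 else 0) + \<alpha> * sf (h-1) * W T (h-1) (z+1) + (1-\<alpha>) * sf (h+1) * W T (h+1) (z+1))
        + (1-\<alpha>) * ((if z-1 = h then 1 else 0) + \<alpha> * sf (h-1) * W T (h-1) (z-1) + (1-\<alpha>) * sf (h+1) * W T (h+1) (z-1)))"
    by (simp only: Suc.IH)
  also have "\<dots> = (if z = h then 1 else 0) + \<alpha> * sf (h-1) * W (Suc T) (h-1) z + (1-\<alpha>) * sf (h+1) * W (Suc T) (h+1) z"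
  proof -
    have h1: "sf z * (if z+1 = h then 1 else 0) = sf (h-1) * (if z = h-1 then 1 else 0)" by auto
    have h2: "sf z * (if z-1 = h then 1 else 0) = sf (h+1) * (if z = h+1 then 1 else 0)" by auto
    note r = ringW[OF h1 h2, where a=\<alpha> and A="W T (h-1) (z+1)" and B="W T (h+1) (z+1)" and C="W T (h-1) (z-1)" and D="W T (h+1) (z-1)"]
    have "(if z = h then 1 else 0) + sf z * (\<alpha> * ((if z+1 = h then 1 else 0) + \<alpha> * sf (h-1) * W T (h-1) (z+1) + (1-\<alpha>) * sf (h+1) * W T (h+1) (z+1))
        + (1-\<alpha>) * ((if z-1 = h then 1 else 0) + \<alpha> * sf (h-1) * W T (h-1) (z-1) + (1-\<alpha>) * sf (h+1) * W T (h+1) (z-1)))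
      = (if z = h then 1 else 0) + (\<alpha> * sf (h-1) * ((if z = h-1 then 1 else 0) + sf z * (\<alpha> * W T (h-1) (z+1) + (1-\<alpha>) * W T (h-1) (z-1)))
        + (1-\<alpha>) * sf (h+1) * ((if z = h+1 then 1 else 0) + sf z * (\<alpha> * W T (h+1) (z+1) + (1-\<alpha>) * W T (h+1) (z-1))))"
      using r by (rule arg_cong)
    then show ?thesis unfolding W.simps(2)[of T "h-1" z] W.simps(2)[of T "h+1" z] by (simp only: add.assoc)
  qed
  finally show ?case .
qed

lemma W_neg: "h < 0 \<Longrightarrow> 0 \<le> z \<Longrightarrow> W T h z = 0"
proof (induction T arbitrary: z)
  case 0 then show ?case by simp
next
  case (Suc T)
  show ?case
  proof (cases "z = 0")
    case True then show ?thesis using Suc by (simp add: sf_low)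
  next
    case False
    then have "W T h (z+1) = 0" "W T h (z-1) = 0" using Suc.prems by (auto intro!: Suc.IH)
    then show ?thesis using Suc.prems False by simp
  qed
qed

end




context expl begin

lemma dual:
  assumes K: "K \<subseteq> {1..N}" and "0 \<le> z"
  shows "fK K T z = (\<Sum>h\<in>{0..int Mh}. W T h z * real (cnt K h)) / real N"
  using \<open>0 \<le> z\<close>
proof (induction T arbitrary: z)
  case 0 then show ?case by (simp add: fK_0)
next
  case (Suc T)
  have cz: "(\<Sum>h\<in>{0..int Mh}. (if z = h then 1 else 0) * real (cnt K h)) = real (cnt K z)"
  proof (cases "z \<le> int Mh")
    have e: "(\<lambda>h. (if z = h then 1 else 0) * real (cnt K h)) = (\<lambda>h. if z = h then real (cnt K h) else 0)" by auto
    case True then show ?thesis using Suc.prems unfolding e by (simp add: sum.delta)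
  next
    have e: "(\<lambda>h. (if z = h then 1 else 0) * real (cnt K h)) = (\<lambda>h. if z = h then real (cnt K h) else 0)" by auto
    case False then show ?thesis using cnt_high[OF K, of z] unfolding e by (simp add: sum.delta)
  qed
  show ?case
  proof (cases "z = 0")
    case True
    then show ?thesis
      unfolding fK_Suc[OF K] using cz by (simp add: sf_low)
  next
    case False
    then have "0 \<le> z - 1" using Suc.prems by simp
    have pw: "W (Suc T) h z * real (cnt K h) = (if z = h then 1 else 0) * real (cnt K h)
         + (sf z * \<alpha>) * (W T h (z+1) * real (cnt K h)) + (sf z * (1-\<alpha>)) * (W T h (z-1) * real (cnt K h))" for h
      by (simp add: algebra_simps)
    define S1 where "S1 = (\<Sum>h\<in>{0..int Mh}. W T h (z+1) * real (cnt K h))"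
    define S2 where "S2 = (\<Sum>h\<in>{0..int Mh}. W T h (z-1) * real (cnt K h))"
    have eq: "(\<Sum>h\<in>{0..int Mh}. W (Suc T) h z * real (cnt K h))
       = real (cnt K z) + (sf z * \<alpha>) * S1 + (sf z * (1-\<alpha>)) * S2"
      unfolding pw sum.distrib sum_distrib_left cz S1_def S2_def by (rule refl)
    have alg: "c / n + s * (a * (x / n) + b * (y / n)) = (c + s * a * x + s * b * y) / n" if "n \<noteq> 0"
      for c n s a b x y :: real using that by (simp add: field_simps)
    have "0 \<le> z + 1" using Suc.prems by simp
    have "fK K (Suc T) z = real (cnt K z) / real N + sf z * (\<alpha> * (S1 / real N) + (1-\<alpha>) * (S2 / real N))"
      unfolding fK_Suc[OF K] Suc.IH[OF \<open>0 \<le> z - 1\<close>] Suc.IH[OF \<open>0 \<le> z + 1\<close>] S1_def S2_def by (rule refl)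
    also have "\<dots> = (real (cnt K z) + sf z * \<alpha> * S1 + sf z * (1-\<alpha>) * S2) / real N"
      using N_pos by (intro alg) simp
    finally show ?thesis unfolding eq by (simp only: mult.assoc)
  qed
qed


lemma fK_mono: assumes K: "K \<subseteq> {1..N}" shows "fK K T z \<le> fK K (Suc T) z"
proof (induction T arbitrary: z)
  case 0 then show ?case by (simp add: fK_0 fK_nonneg)
next
  case (Suc T)
  have "\<alpha> * fK K T (z+1) + (1-\<alpha>) * fK K T (z-1) \<le> \<alpha> * fK K (Suc T) (z+1) + (1-\<alpha>) * fK K (Suc T) (z-1)"
    by (intro add_mono mult_left_mono Suc.IH) (use alpha_ge alpha_le1 in auto)
  from mult_left_mono[OF this sf_nonneg[of z]] show ?case
    unfolding fK_Suc[OF K, of T z] fK_Suc[OF K, of "Suc T" z] by linarith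
qed

lemma z0_pos: "0 \<le> z0" by (simp add: z0_def)

lemma W_bound_mid: assumes "h \<in> {0..int Mh}" shows "W T h z0 \<le> real N"
proof -
  have "fK {1..N} T z0 = (\<Sum>h\<in>{0..int Mh}. W T h z0 * real (cnt {1..N} h)) / real N"
    by (rule dual) (auto simp: z0_pos)
  with fK_le1[of "{1..N}" T z0] N_pos have S: "(\<Sum>h\<in>{0..int Mh}. W T h z0 * real (cnt {1..N} h)) \<le> real N"
    by (simp add: divide_le_eq)
  have "1 \<le> cnt {1..N} h" using assms by (intro cnt_pos) auto
  then have "W T h z0 \<le> W T h z0 * real (cnt {1..N} h)"
    using W_nonneg[of T h z0] by (simp add: mult_le_cancel_left1)
  also have "\<dots> \<le> (\<Sum>h\<in>{0..int Mh}. W T h z0 * real (cnt {1..N} h))"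
    using assms by (intro member_le_sum) (auto intro!: mult_nonneg_nonneg W_nonneg)
  finally show ?thesis using S by linarith
qed

lemma W_bound: assumes "h \<in> {-1..z0}" shows "W T h z0 \<le> 2 * real N"
proof -
  consider "h = -1" | "h \<in> {0..int Mh}" | "h = z0" using assms by (force simp: z0_def)
  then show ?thesis
  proof cases
    case 1 then show ?thesis using W_neg[of h z0 T] z0_pos by simp
  next
    case 2 then show ?thesis using W_bound_mid[of h T] by simp
  next
    case 3
    have "W (Suc T) (int Mh) z0 = \<alpha> * sf (int Mh - 1) * W T (int Mh - 1) z0 + (1-\<alpha>) * sf (int Mh + 1) * W T (int Mh + 1) z0"
      by (subst W_fwd) (simp add: z0_def)
    moreover have "sf (int Mh + 1) = 1" by (rule sf_high) simp
    moreover have "0 \<le> \<alpha> * sf (int Mh - 1) * W T (int Mh - 1) z0"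
      using alpha_ge by (intro mult_nonneg_nonneg sf_nonneg W_nonneg) auto
    moreover have "W (Suc T) (int Mh) z0 \<le> real N" by (rule W_bound_mid) simp
    ultimately have "(1-\<alpha>) * W T z0 z0 \<le> real N" by (simp add: z0_def)
    moreover have "W T z0 z0 \<le> 2 * ((1-\<alpha>) * W T z0 z0)"
    proof -
      have "(2 * \<alpha>) * W T z0 z0 \<le> 1 * W T z0 z0"
        using alpha_le W_nonneg[of T z0 z0] by (intro mult_right_mono) auto
      then show ?thesis by (simp add: algebra_simps)
    qed
    ultimately have "W T z0 z0 \<le> 2 * real N" by linarith
    then show ?thesis using 3 by simp
  qed
qed

definition "Gr h = lim (\<lambda>T. W T h z0)"

lemma Gr_lim: assumes "h \<in> {-1..z0}" shows "(\<lambda>T. W T h z0) \<longlonglongrightarrow> Gr h"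
proof -
  have "incseq (\<lambda>T. W T h z0)" by (rule incseq_SucI) (rule W_mono)
  moreover have "bdd_above (range (\<lambda>T. W T h z0))" using W_bound[OF assms] by (intro bdd_aboveI) auto
  ultimately have "convergent (\<lambda>T. W T h z0)" using LIMSEQ_incseq_SUP convergentI by blast
  then show ?thesis unfolding Gr_def by (simp add: convergent_LIMSEQ_iff)
qed

lemma Gr_nonneg: assumes "h \<in> {-1..z0}" shows "0 \<le> Gr h"
  by (rule LIMSEQ_le_const[OF Gr_lim[OF assms]]) (auto intro: W_nonneg)

lemma Gr_m1: "Gr (-1) = 0"
proof -
  have "(\<lambda>T. W T (-1) z0) \<longlonglongrightarrow> Gr (-1)" by (rule Gr_lim) (simp add: z0_def)
  moreover have "(\<lambda>T. W T (-1) z0) = (\<lambda>T. 0)" using W_neg z0_pos by auto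
  ultimately show ?thesis using LIMSEQ_unique by auto
qed

lemma Gr_eq: assumes h: "h \<in> {0..int Mh}"
  shows "Gr h = \<alpha> * sf (h-1) * Gr (h-1) + (1-\<alpha>) * sf (h+1) * Gr (h+1)"
proof -
  have hr: "h \<in> {-1..z0}" "h-1 \<in> {-1..z0}" "h+1 \<in> {-1..z0}" using h by (auto simp: z0_def)
  have "(\<lambda>T. W (Suc T) h z0) \<longlonglongrightarrow> Gr h" using Gr_lim[OF hr(1)] by (rule LIMSEQ_Suc)
  moreover have "(\<lambda>T. W (Suc T) h z0) = (\<lambda>T. \<alpha> * sf (h-1) * W T (h-1) z0 + (1-\<alpha>) * sf (h+1) * W T (h+1) z0)"
    using h by (intro ext, subst W_fwd) (simp add: z0_def)
  moreover have "(\<lambda>T. \<alpha> * sf (h-1) * W T (h-1) z0 + (1-\<alpha>) * sf (h+1) * W T (h+1) z0) \<longlonglongrightarrow> \<alpha> * sf (h-1) * Gr (h-1) + (1-\<alpha>) * sf (h+1) * Gr (h+1)"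
    by (intro tendsto_intros Gr_lim hr)
  ultimately show ?thesis using LIMSEQ_unique by metis
qed

lemma Gr_step: "n \<le> Mh + 1 \<Longrightarrow> Gr (int n - 1) \<le> Gr (int n)"
proof (induction n)
  case 0 then show ?case using Gr_m1 Gr_nonneg[of 0] by (simp add: z0_def)
next
  case (Suc n)
  define h where "h = int n"
  have h: "h \<in> {0..int Mh}" using Suc.prems by (simp add: h_def)
  have IH: "Gr (h-1) \<le> Gr h" using Suc by (simp add: h_def)
  have nn: "0 \<le> Gr (h-1)" "0 \<le> Gr h" "0 \<le> Gr (h+1)" using h by (auto intro!: Gr_nonneg simp: z0_def)
  have "Gr h = \<alpha> * sf (h-1) * Gr (h-1) + (1-\<alpha>) * sf (h+1) * Gr (h+1)" by (rule Gr_eq[OF h])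
  also have "\<dots> \<le> \<alpha> * Gr h + (1-\<alpha>) * Gr (h+1)"
  proof (intro add_mono)
    have "sf (h-1) * Gr (h-1) \<le> 1 * Gr h" using IH nn sf_le1 sf_nonneg by (intro mult_mono) auto
    then show "\<alpha> * sf (h-1) * Gr (h-1) \<le> \<alpha> * Gr h" using alpha_ge by (simp add: mult.assoc mult_left_mono)
    have "sf (h+1) * Gr (h+1) \<le> 1 * Gr (h+1)" using nn sf_le1 sf_nonneg by (intro mult_right_mono) auto
    then show "(1-\<alpha>) * sf (h+1) * Gr (h+1) \<le> (1-\<alpha>) * Gr (h+1)" using alpha_le1 by (simp add: mult.assoc mult_left_mono)
  qed
  finally have "(1-\<alpha>) * Gr h \<le> (1-\<alpha>) * Gr (h+1)" by (simp add: algebra_simps)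
  then have "Gr h \<le> Gr (h+1)" using alpha_le by (simp add: mult_le_cancel_left)
  then show ?case by (simp add: h_def add.commute)
qed

lemma Gr_mono: assumes "0 \<le> h" "h \<le> h'" "h' \<le> int Mh" shows "Gr h \<le> Gr h'"
proof -
  obtain d where d: "h' = h + int d" using assms(2) by (metis zle_iff_zadd)
  have "Gr h \<le> Gr (h + int d)" if "h + int d \<le> int Mh" for d
    using that
  proof (induction d)
    case 0 then show ?case by simp
  next
    case (Suc d)
    have e: "h + int (Suc d) = h + int d + 1" by simp
    have "Gr (h + int d) \<le> Gr (h + int d + 1)"
      using Gr_step[of "nat (h + int d + 1)"] Suc.prems assms(1) by simp
    then have "Gr (h + int d) \<le> Gr (h + int (Suc d))" unfolding e .
    then show ?case using Suc by simp
  qed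
  then show ?thesis using d assms by simp
qed

lemma lim_fK: assumes K: "K \<subseteq> {1..N}"
  shows "(\<lambda>T. fK K T z0) \<longlonglongrightarrow> (\<Sum>h\<in>{0..int Mh}. Gr h * real (cnt K h)) / real N"
proof -
  have "(\<lambda>T. fK K T z0) = (\<lambda>T. (\<Sum>h\<in>{0..int Mh}. W T h z0 * real (cnt K h)) / real N)"
    using dual[OF K z0_pos] by auto
  moreover have "(\<lambda>T. (\<Sum>h\<in>{0..int Mh}. W T h z0 * real (cnt K h)) / real N) \<longlonglongrightarrow> (\<Sum>h\<in>{0..int Mh}. Gr h * real (cnt K h)) / real N"
    using N_pos by (intro tendsto_intros Gr_lim) (auto simp: z0_def)
  ultimately show ?thesis by simp
qed

end




lemma sum_if_split_g:
  fixes x :: "'a \<Rightarrow> real"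
  assumes "finite A"
  shows "(\<Sum>i\<in>A. if P i then x i else y) = (\<Sum>i\<in>{i\<in>A. P i}. x i) + real (card {i\<in>A. \<not> P i}) * y"
proof -
  have "(\<Sum>i\<in>A. if P i then x i else y) = (\<Sum>i\<in>A \<inter> {i. P i}. x i) + (\<Sum>i\<in>A \<inter> - {i. P i}. y)"
    using assms by (rule sum.If_cases)
  moreover have "A \<inter> {i. P i} = {i\<in>A. P i}" "A \<inter> - {i. P i} = {i\<in>A. \<not> P i}" by auto
  ultimately show ?thesis by simp
qed

lemma cheb:
  fixes G a c :: "int \<Rightarrow> real" and H :: "int set"
  assumes fin: "finite H"
    and mono: "\<And>h h'. h \<in> H \<Longrightarrow> h' \<in> H \<Longrightarrow> h' \<le> h \<Longrightarrow> G h' \<le> G h"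
    and cross: "\<And>h h'. h \<in> H \<Longrightarrow> h' \<in> H \<Longrightarrow> h' \<le> h \<Longrightarrow> a h' * c h \<le> a h * c h'"
  shows "(\<Sum>h\<in>H. a h) * (\<Sum>h\<in>H. G h * c h) \<le> (\<Sum>h\<in>H. c h) * (\<Sum>h\<in>H. G h * a h)"
proof -
  define t where "t h h' = G h * (a h * c h' - a h' * c h)" for h h'
  have X: "(\<Sum>h\<in>H. c h) * (\<Sum>h\<in>H. G h * a h) - (\<Sum>h\<in>H. a h) * (\<Sum>h\<in>H. G h * c h) = (\<Sum>h\<in>H. \<Sum>h'\<in>H. t h h')"
  proof -
    have "(\<Sum>h\<in>H. c h) * (\<Sum>h\<in>H. G h * a h) = (\<Sum>h\<in>H. \<Sum>h'\<in>H. G h * a h * c h')"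
      by (subst mult.commute) (simp add: sum_product)
    moreover have "(\<Sum>h\<in>H. a h) * (\<Sum>h\<in>H. G h * c h) = (\<Sum>h\<in>H. \<Sum>h'\<in>H. G h * c h * a h')"
      by (subst mult.commute) (simp add: sum_product)
    ultimately show ?thesis
      by (simp add: t_def sum_subtractf[symmetric] algebra_simps)
  qed
  have sw: "(\<Sum>h\<in>H. \<Sum>h'\<in>H. t h h') = (\<Sum>h\<in>H. \<Sum>h'\<in>H. t h' h)"
    by (rule sum.swap)
  have pair: "0 \<le> t h h' + t h' h" if "h \<in> H" "h' \<in> H" for h h'
  proof -
    have e: "t h h' + t h' h = (G h - G h') * (a h * c h' - a h' * c h)"
      by (simp add: t_def algebra_simps)
    show ?thesis
    proof (cases "h' \<le> h")
      case True
      then show ?thesis unfolding e using mono[OF that True] cross[OF that True] by simp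
    next
      case False
      then have "h \<le> h'" by simp
      then show ?thesis unfolding e using mono[OF that(2,1)] cross[OF that(2,1)]
        by (simp add: mult_nonpos_nonpos)
    qed
  qed
  have "0 \<le> (\<Sum>h\<in>H. \<Sum>h'\<in>H. t h h' + t h' h)"
    using pair by (intro sum_nonneg) auto
  also have "\<dots> = 2 * (\<Sum>h\<in>H. \<Sum>h'\<in>H. t h h')"
    using sw by (simp add: sum.distrib)
  finally show ?thesis using X by linarith
qed

context expl begin

definition "gl z = lim (\<lambda>T. fK {1..N} T z)"

lemma gl_lim: "(\<lambda>T. fK {1..N} T z) \<longlonglongrightarrow> gl z"
proof -
  have "incseq (\<lambda>T. fK {1..N} T z)" by (rule incseq_SucI) (rule fK_mono, simp)
  moreover have "bdd_above (range (\<lambda>T. fK {1..N} T z))" using fK_le1 by (intro bdd_aboveI) auto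
  ultimately have "convergent (\<lambda>T. fK {1..N} T z)" using LIMSEQ_incseq_SUP convergentI by blast
  then show ?thesis unfolding gl_def by (simp add: convergent_LIMSEQ_iff)
qed

lemma gl_ge: "0 \<le> gl z"
  by (rule LIMSEQ_le_const[OF gl_lim]) (auto intro: fK_nonneg)

lemma gl_le: "gl z \<le> 1"
  by (rule LIMSEQ_le_const2[OF gl_lim]) (auto intro: fK_le1)

lemma gl_eq: "gl z = real (cnt {1..N} z) / real N + sf z * (\<alpha> * gl (z+1) + (1-\<alpha>) * gl (z-1))"
proof -
  have "(\<lambda>T. fK {1..N} (Suc T) z) \<longlonglongrightarrow> gl z" using gl_lim by (rule LIMSEQ_Suc)
  moreover have "(\<lambda>T. fK {1..N} (Suc T) z) = (\<lambda>T. real (cnt {1..N} z) / real N + sf z * (\<alpha> * fK {1..N} T (z+1) + (1-\<alpha>) * fK {1..N} T (z-1)))"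
    by (intro ext fK_Suc) simp
  moreover have "(\<lambda>T. real (cnt {1..N} z) / real N + sf z * (\<alpha> * fK {1..N} T (z+1) + (1-\<alpha>) * fK {1..N} T (z-1)))
      \<longlonglongrightarrow> real (cnt {1..N} z) / real N + sf z * (\<alpha> * gl (z+1) + (1-\<alpha>) * gl (z-1))"
    by (intro tendsto_intros gl_lim)
  ultimately show ?thesis using LIMSEQ_unique by metis
qed

definition "u z = 1 - gl z"

lemma u_ge: "0 \<le> u z" and u_le: "u z \<le> 1"
  using gl_ge[of z] gl_le[of z] by (auto simp: u_def)

lemma u_eq: "u z = sf z * (\<alpha> * u (z+1) + (1-\<alpha>) * u (z-1))"
proof -
  have c: "real (cnt {1..N} z) / real N = 1 - sf z" by (simp add: sf_def)
  have "u z = 1 - (real (cnt {1..N} z) / real N + sf z * (\<alpha> * gl (z+1) + (1-\<alpha>) * gl (z-1)))"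
    unfolding u_def by (subst gl_eq) (rule refl)
  also have "\<dots> = sf z * (\<alpha> * u (z+1) + (1-\<alpha>) * u (z-1))"
    unfolding c u_def by (simp add: algebra_simps)
  finally show ?thesis .
qed

lemma u_top: "u z0 = u (int Mh)"
proof (cases "\<alpha> = 0")
  case True
  have "sf z0 = 1" by (rule sf_high) (simp add: z0_def)
  then show ?thesis using u_eq[of z0] True by (simp add: z0_def)
next
  case False
  then have a: "\<alpha> = 1/2" using alpha by auto
  have rec: "u (z+1) = 2 * u z - u (z-1)" if "z0 \<le> z" for z
  proof -
    have "sf z = 1" using that by (intro sf_high) (simp add: z0_def)
    then show ?thesis using u_eq[of z] a by simp
  qed
  define d where "d = u z0 - u (int Mh)"
  have lin: "u (int Mh + int j) = u (int Mh) + real j * d \<and> u (int Mh + int j + 1) = u (int Mh) + (real j + 1) * d" for j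
  proof (induction j)
    case 0 then show ?case by (simp add: d_def z0_def)
  next
    case (Suc j)
    have "u (int Mh + int j + 1 + 1) = 2 * u (int Mh + int j + 1) - u (int Mh + int j + 1 - 1)"
      by (rule rec) (simp add: z0_def)
    then have "u (int Mh + int (Suc j) + 1) = 2 * u (int Mh + int j + 1) - u (int Mh + int j)"
      by (simp add: ac_simps)
    then show ?case using Suc by (simp add: algebra_simps)
  qed
  have "d = 0"
  proof (rule ccontr)
    assume "d \<noteq> 0"
    then consider "0 < d" | "d < 0" by linarith
    then show False
    proof cases
      case 1
      obtain n where n: "2 < real n * d" using ex_less_of_nat_mult[OF 1] by blast
      have "u (int Mh + int n) = u (int Mh) + real n * d" using lin by blast
      then show False using n u_le[of "int Mh + int n"] u_ge[of "int Mh"] by linarith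
    next
      case 2
      then have "0 < - d" by simp
      obtain n where n: "2 < real n * (- d)" using ex_less_of_nat_mult[OF \<open>0 < - d\<close>] by blast
      have "u (int Mh + int n) = u (int Mh) + real n * d" using lin by blast
      then show False using n u_ge[of "int Mh + int n"] u_le[of "int Mh"] by simp
    qed
  qed
  then show ?thesis by (simp add: d_def)
qed

lemma u_zero: "u z0 = 0"
proof -
  define m where "m = Max (u ` {0..int Mh})"
  have fin: "finite (u ` {0..int Mh})" "u ` {0..int Mh} \<noteq> {}" by auto
  have "m \<in> u ` {0..int Mh}" using Max_in[OF fin] by (simp add: m_def)
  then obtain z1 where z1: "z1 \<in> {0..int Mh}" "u z1 = m" by blast
  have le: "u z \<le> m" if "z \<in> {0..z0}" for z
  proof (cases "z = z0")
    case True
    then show ?thesis using u_top Max_ge[OF fin(1), of "u (int Mh)"] by (simp add: m_def)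
  next
    case False
    then have "z \<in> {0..int Mh}" using that by (auto simp: z0_def)
    then show ?thesis using Max_ge[OF fin(1)] by (simp add: m_def)
  qed
  have m0: "m = 0"
  proof (cases "z1 = 0")
    case True
    then show ?thesis using z1 u_eq[of 0] sf_low[of 0] by simp
  next
    case False
    then have r: "z1 - 1 \<in> {0..z0}" "z1 + 1 \<in> {0..z0}" using z1 by (auto simp: z0_def)
    have "u z1 \<le> sf z1 * (\<alpha> * m + (1-\<alpha>) * m)"
      unfolding u_eq[of z1]
      using le[OF r(1)] le[OF r(2)] alpha_ge alpha_le1 sf_nonneg[of z1]
      by (intro mult_left_mono add_mono) (auto intro: mult_left_mono)
    also have "\<dots> = sf z1 * m" by (simp add: algebra_simps)
    also have "\<dots> \<le> (1 - 1 / real N) * m"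
      using sf_mid[of z1] z1 u_ge[of z1] by (intro mult_right_mono) auto
    finally have "m \<le> m - m / real N" using z1 by (simp add: algebra_simps)
    then have "m / real N \<le> 0" by simp
    then have "m \<le> 0" using N_pos by (simp add: divide_le_0_iff)
    then show ?thesis using z1 u_ge[of z1] by simp
  qed
  have "u (int Mh) \<le> m" by (rule le) (simp add: z0_def)
  then show ?thesis using u_top u_ge[of "int Mh"] m0 by simp
qed

lemma total: "(\<Sum>h\<in>{0..int Mh}. Gr h * real (cnt {1..N} h)) / real N = 1"
proof -
  have "(\<lambda>T. fK {1..N} T z0) \<longlonglongrightarrow> (\<Sum>h\<in>{0..int Mh}. Gr h * real (cnt {1..N} h)) / real N"
    by (rule lim_fK) simp
  moreover have "(\<lambda>T. fK {1..N} T z0) \<longlonglongrightarrow> 1"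
    using gl_lim[of z0] u_zero by (simp add: u_def)
  ultimately show ?thesis using LIMSEQ_unique by blast
qed

lemma cnt_sum: assumes K: "K \<subseteq> {1..N}"
  shows "(\<Sum>h\<in>{0..int Mh}. real (cnt K h)) = (\<Sum>i\<in>K. real (eta i) + 1)"
proof -
  have finK: "finite K" using K finite_subset by blast
  have c: "real (cnt K h) = (\<Sum>i\<in>K. if h \<le> int (eta i) then 1 else 0)" for h
    using sum_if_split[OF finK, of "\<lambda>i. h \<le> int (eta i)" "\<lambda>_. 1" 0] by (simp add: cnt_def)
  have d: "(\<Sum>h\<in>{0..int Mh}. if h \<le> int (eta i) then 1 else 0) = real (eta i) + 1" if "i \<in> K" for i
  proof -
    have "(\<Sum>h\<in>{0..int Mh}. if h \<le> int (eta i) then 1 else (0::real)) = real (card {h\<in>{0..int Mh}. h \<le> int (eta i)})"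
      using sum_if_split_g[of "{0..int Mh}" "\<lambda>h. h \<le> int (eta i)" "\<lambda>_. 1" 0] by simp
    also have "{h\<in>{0..int Mh}. h \<le> int (eta i)} = {0..int (eta i)}"
      using eta_le[of i] K that by auto
    finally show ?thesis by simp
  qed
  have "(\<Sum>h\<in>{0..int Mh}. real (cnt K h)) = (\<Sum>h\<in>{0..int Mh}. \<Sum>i\<in>K. if h \<le> int (eta i) then 1 else 0)"
    unfolding c ..
  also have "\<dots> = (\<Sum>i\<in>K. \<Sum>h\<in>{0..int Mh}. if h \<le> int (eta i) then 1 else 0)"
    by (rule sum.swap)
  also have "\<dots> = (\<Sum>i\<in>K. real (eta i) + 1)"
    using d by (rule sum.cong[OF refl])
  finally show ?thesis .
qed

lemma cross:
  assumes ord: "ordered_config N eta" and k: "1 \<le> k" "k \<le> N" and hh: "h' \<le> h"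
  shows "real (cnt {1..k} h') * real (cnt {1..N} h) \<le> real (cnt {1..k} h) * real (cnt {1..N} h')"
proof -
  have split: "cnt {1..N} x = cnt {1..k} x + cnt {Suc k..N} x" for x
  proof -
    have "{i\<in>{1..N}. x \<le> int (eta i)} = {i\<in>{1..k}. x \<le> int (eta i)} \<union> {i\<in>{Suc k..N}. x \<le> int (eta i)}"
      using k by auto
    moreover have "{i\<in>{1..k}. x \<le> int (eta i)} \<inter> {i\<in>{Suc k..N}. x \<le> int (eta i)} = {}" by auto
    ultimately show ?thesis unfolding cnt_def by (simp add: card_Un_disjoint)
  qed
  define a where "a = cnt {1..k} h"
  define a' where "a' = cnt {1..k} h'"
  define b where "b = cnt {Suc k..N} h"
  define b' where "b' = cnt {Suc k..N} h'"
  have bb: "b \<le> b'" unfolding b_def b'_def cnt_def using hh by (intro card_mono) auto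
  have "card {i\<in>{1..k}. h' \<le> int (eta i)} \<le> card {1..k}" by (rule card_mono) auto
  then have ak: "a' \<le> k" by (simp add: a'_def cnt_def)
  have main: "a' * (a + b) \<le> a * (a' + b')"
  proof (cases "b = 0")
    case True
    then show ?thesis by simp
  next
    case False
    then have "{i\<in>{Suc k..N}. h \<le> int (eta i)} \<noteq> {}" unfolding b_def cnt_def by (metis card.empty)
    then obtain j where j: "j \<in> {Suc k..N}" "h \<le> int (eta j)" by blast
    have "{i\<in>{1..k}. h \<le> int (eta i)} = {1..k}"
    proof safe
      fix i assume "i \<in> {1..k}"
      then have "eta j \<le> eta i" using ord j unfolding ordered_config_def by auto
      then show "h \<le> int (eta i)" using j by linarith
    qed
    then have "a = k" unfolding a_def cnt_def by simp
    have "a' * (a + b) = a' * k + a' * b" using \<open>a = k\<close> by (simp add: algebra_simps)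
    also have "\<dots> \<le> k * a' + k * b'" using ak bb by (simp add: mult_mono)
    also have "\<dots> = a * (a' + b')" using \<open>a = k\<close> by (simp add: algebra_simps)
    finally show ?thesis .
  qed
  have "real a' * real (a + b) \<le> real a * real (a' + b')"
    using main by (metis of_nat_le_iff of_nat_mult)
  then show ?thesis unfolding a_def a'_def b_def b'_def split by simp
qed

lemma main_ineq:
  assumes ord: "ordered_config N eta" and k: "1 \<le> k" "k \<le> N"
  shows "(\<Sum>i\<in>{1..k}. real (eta i) + 1) / (\<Sum>i\<in>{1..N}. real (eta i) + 1)
    \<le> (\<Sum>h\<in>{0..int Mh}. Gr h * real (cnt {1..k} h)) / real N"
proof -
  let ?H = "{0..int Mh}"
  let ?a = "\<lambda>h. real (cnt {1..k} h)" and ?c = "\<lambda>h. real (cnt {1..N} h)"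
  have ineq: "(\<Sum>h\<in>?H. ?a h) * (\<Sum>h\<in>?H. Gr h * ?c h) \<le> (\<Sum>h\<in>?H. ?c h) * (\<Sum>h\<in>?H. Gr h * ?a h)"
  proof (rule cheb)
    show "finite ?H" by simp
    show "Gr h' \<le> Gr h" if "h \<in> ?H" "h' \<in> ?H" "h' \<le> h" for h h' using that by (intro Gr_mono) auto
    show "?a h' * ?c h \<le> ?a h * ?c h'" if "h \<in> ?H" "h' \<in> ?H" "h' \<le> h" for h h' using that by (intro cross[OF ord k])
  qed
  have A: "(\<Sum>h\<in>?H. ?a h) = (\<Sum>i\<in>{1..k}. real (eta i) + 1)" using k by (intro cnt_sum) auto
  have C: "(\<Sum>h\<in>?H. ?c h) = (\<Sum>i\<in>{1..N}. real (eta i) + 1)" by (intro cnt_sum) auto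
  have T: "(\<Sum>h\<in>?H. Gr h * ?c h) = real N" using total N_pos by (simp add: divide_eq_1_iff)
  have Cpos: "0 < (\<Sum>i\<in>{1..N}. real (eta i) + 1)" using N_pos by (intro sum_pos) auto
  from ineq have "(\<Sum>i\<in>{1..k}. real (eta i) + 1) * real N \<le> (\<Sum>i\<in>{1..N}. real (eta i) + 1) * (\<Sum>h\<in>?H. Gr h * ?a h)"
    unfolding A C T .
  then show ?thesis using Cpos N_pos by (simp add: divide_le_eq le_divide_eq mult.commute)
qed

end




lemma to_stream_snth[simp]: "to_stream X !! n = X n"
  by (simp add: to_stream_def)

context expl begin

definition "BB K = {x\<in>space (stream_space (Mp N S)). \<exists>T. hitL eta K z0 (stake T x)}"

lemma BB_iff: "x \<in> BB K \<longleftrightarrow> (\<exists>n. stopsS eta z0 x n \<and> (\<forall>m<n. \<not> stopsS eta z0 x m) \<and> fst (x !! n) \<in> K)"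
  unfolding BB_def hitL_stake by (auto simp: space_stream_space Mp_def)

lemma BB_sets: "BB K \<in> sets (stream_space (Mp N S))"
proof -
  have "BB K = (\<Union>T. {x\<in>space (stream_space (Mp N S)). hitL eta K z0 (stake T x)})"
    unfolding BB_def by auto
  also have "\<dots> \<in> sets (stream_space (Mp N S))"
    using hit_set_meas by (intro sets.countable_nat_UN) auto
  finally show ?thesis .
qed

lemma BB_lim: assumes K: "K \<subseteq> {1..N}"
  shows "measure (stream_space (Mp N S)) (BB K) = (\<Sum>h\<in>{0..int Mh}. Gr h * real (cnt K h)) / real N"
proof -
  interpret P: prob_space "stream_space (Mp N S)" by (rule prob_str)
  define A where "A T = {x\<in>space (stream_space (Mp N S)). hitL eta K z0 (stake T x)}" for T
  have "(\<lambda>T. measure (stream_space (Mp N S)) (A T)) \<longlonglongrightarrow> measure (stream_space (Mp N S)) (\<Union>T. A T)"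
  proof (rule P.finite_Lim_measure_incseq)
    show "range A \<subseteq> sets (stream_space (Mp N S))" using hit_set_meas unfolding A_def by auto
    show "incseq A"
    proof (rule incseq_SucI)
      fix T show "A T \<subseteq> A (Suc T)" unfolding A_def hitL_stake using less_SucI by blast
    qed
  qed
  moreover have "(\<Union>T. A T) = BB K" unfolding A_def BB_def by auto
  moreover have "(\<lambda>T. measure (stream_space (Mp N S)) (A T)) = (\<lambda>T. fK K T z0)"
    unfolding A_def fK_def by simp
  ultimately show ?thesis using lim_fK[OF K] LIMSEQ_unique by metis
qed

lemma attach_eq: "attach_prob S N eta i = measure (stream_space (Mp N S)) (BB {i})"
proof -
  let ?PM = "explorer_space N S" and ?SS = "stream_space (Mp N S)"
  have PM: "?PM = (\<Pi>\<^sub>M i\<in>UNIV. Mp N S)" by (simp add: explorer_space_def Mp_def)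
  have st: "expl_stops N eta \<omega> n \<longleftrightarrow> stopsS eta z0 (to_stream \<omega>) n" for \<omega> n
    by (simp add: expl_stops_def stopsS_def expl_height_def z0_def Mh_def)
  have set: "{\<omega> \<in> space ?PM. \<exists>n. expl_stops N eta \<omega> n \<and> (\<forall>m<n. \<not> expl_stops N eta \<omega> m) \<and> fst (\<omega> n) = i}
      = to_stream -` BB {i} \<inter> space ?PM"
    unfolding st by (auto simp: BB_iff)
  have "measure ?SS (BB {i}) = measure (distr ?PM ?SS to_stream) (BB {i})"
    unfolding PM by (subst stream_space_eq_distr) (rule refl)
  also have "\<dots> = measure ?PM (to_stream -` BB {i} \<inter> space ?PM)"
    unfolding PM by (rule measure_distr[OF measurable_to_stream BB_sets])
  finally show ?thesis unfolding attach_prob_def set by simp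
qed

lemma attach_sum:
  assumes k: "k \<le> N"
  shows "(\<Sum>i=1..k. attach_prob S N eta i) = (\<Sum>h\<in>{0..int Mh}. Gr h * real (cnt {1..k} h)) / real N"
proof -
  interpret P: prob_space "stream_space (Mp N S)" by (rule prob_str)
  have disj: "disjoint_family_on (\<lambda>i. BB {i}) {1..k}"
    unfolding disjoint_family_on_def
  proof (intro ballI impI)
    fix i j assume ij: "i \<in> {1..k}" "j \<in> {1..k}" "i \<noteq> j"
    show "BB {i} \<inter> BB {j} = {}"
    proof (rule ccontr)
      assume "BB {i} \<inter> BB {j} \<noteq> {}"
      then obtain x where "x \<in> BB {i}" "x \<in> BB {j}" by blast
      then obtain n1 n2 where
        n1: "stopsS eta z0 x n1" "\<forall>m<n1. \<not> stopsS eta z0 x m" "fst (x !! n1) = i" and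
        n2: "stopsS eta z0 x n2" "\<forall>m<n2. \<not> stopsS eta z0 x m" "fst (x !! n2) = j"
        unfolding BB_iff by auto
      have "n1 = n2" using n1 n2 by (metis linorder_neqE_nat)
      then show False using n1 n2 ij by simp
    qed
  qed
  have "(\<Sum>i=1..k. attach_prob S N eta i) = (\<Sum>i\<in>{1..k}. measure (stream_space (Mp N S)) (BB {i}))"
    by (simp add: attach_eq)
  also have "\<dots> = measure (stream_space (Mp N S)) (\<Union>i\<in>{1..k}. BB {i})"
    using disj BB_sets by (intro P.finite_measure_finite_Union[symmetric]) auto
  also have "(\<Union>i\<in>{1..k}. BB {i}) = BB {1..k}"
  proof (rule set_eqI)
    fix x show "x \<in> (\<Union>i\<in>{1..k}. BB {i}) \<longleftrightarrow> x \<in> BB {1..k}"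
      unfolding UN_iff BB_iff by blast
  qed
  also have "measure (stream_space (Mp N S)) (BB {1..k}) = (\<Sum>h\<in>{0..int Mh}. Gr h * real (cnt {1..k} h)) / real N"
    using k by (intro BB_lim) auto
  finally show ?thesis .
qed

lemma final:
  assumes ord: "ordered_config N eta" and k: "1 \<le> k" "k \<le> N"
  shows "(\<Sum>i=1..k. (real (eta i) + 1) / (real (config_size N eta) + real N)) \<le> (\<Sum>i=1..k. attach_prob S N eta i)"
proof -
  have cs: "real (config_size N eta) + real N = (\<Sum>i\<in>{1..N}. real (eta i) + 1)"
    by (simp add: config_size_def sum.distrib)
  have "(\<Sum>i=1..k. (real (eta i) + 1) / (real (config_size N eta) + real N)) = (\<Sum>i\<in>{1..k}. real (eta i) + 1) / (\<Sum>i\<in>{1..N}. real (eta i) + 1)"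
    unfolding cs by (simp add: sum_divide_distrib)
  also have "\<dots> \<le> (\<Sum>h\<in>{0..int Mh}. Gr h * real (cnt {1..k} h)) / real N"
    by (rule main_ineq[OF ord k])
  also have "\<dots> = (\<Sum>i=1..k. attach_prob S N eta i)"
    using attach_sum[OF k(2)] by simp
  finally show ?thesis .
qed

end

lemma expl_ballistic: "2 \<le> N \<Longrightarrow> expl N ballistic_step 0"
  unfolding expl_def ballistic_step_def by simp

lemma expl_diffusive: "2 \<le> N \<Longrightarrow> expl N diffusive_step (1/2)"
proof -
  assume N: "2 \<le> N"
  have "(\<integral>\<^sup>+\<xi>. ennreal (F \<xi>) \<partial>diffusive_step) = ennreal (1/2 * F 1 + (1 - 1/2) * F (-1))"
    if "0 \<le> F 1" "0 \<le> F (-1)" for F :: "int \<Rightarrow> real"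
  proof -
    have "(\<integral>\<^sup>+\<xi>. ennreal (F \<xi>) \<partial>diffusive_step) = (ennreal (F (-1)) + ennreal (F 1)) / 2"
      unfolding diffusive_step_def by (subst nn_integral_pmf_of_set) auto
    also have "\<dots> = ennreal (F (-1) + F 1) / 2"
      using that by (simp only: ennreal_plus)
    also have "\<dots> = ennreal ((F (-1) + F 1) / 2)"
      using divide_ennreal[of "F (-1) + F 1" 2] that by simp
    finally show ?thesis by (simp add: field_simps)
  qed
  then show ?thesis unfolding expl_def using N by simp
qed

theorem lemma3p7:
  fixes N :: nat and eta :: "nat \<Rightarrow> nat" and k :: nat
  assumes "N \<ge> 2"
    and "ordered_config N eta"
    and "1 \<le> k" and "k \<le> N"
  shows "(\<Sum>i=1..k. pB N eta i) \<ge>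
           (\<Sum>i=1..k. (real (eta i) + 1) / (real (config_size N eta) + real N))
       \<and> (\<Sum>i=1..k. pD N eta i) \<ge>
           (\<Sum>i=1..k. (real (eta i) + 1) / (real (config_size N eta) + real N))"
proof
  interpret B: expl N eta ballistic_step 0 by (rule expl_ballistic[OF assms(1)])
  show "(\<Sum>i=1..k. pB N eta i) \<ge> (\<Sum>i=1..k. (real (eta i) + 1) / (real (config_size N eta) + real N))"
    unfolding pB_def using B.final[OF assms(2-4)] .
next
  interpret D: expl N eta diffusive_step "1/2" by (rule expl_diffusive[OF assms(1)])
  show "(\<Sum>i=1..k. pD N eta i) \<ge> (\<Sum>i=1..k. (real (eta i) + 1) / (real (config_size N eta) + real N))"
    unfolding pD_def using D.final[OF assms(2-4)] .
qed


end
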